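(* Let $\mathcal{G}=(\mathcal{V}_A\cup\mathcal{V}_T,\mathcal{E},w)$ be a weighted bipartite graph with $|\mathcal{V}_A|\le|\mathcal{V}_T|$ that has at least one maximum matching (in the sense defined in the context). Let $e^*\in A(\mathcal{G})$ be a bottleneck edge of $\mathcal{G}$. Let $\mathcal{G}^-$ be the graph obtained from $\mathcal{G}$ by deleting both endpoints of $e^*$ together with all edges incident to them, and let $\mathcal{G}^+$ be the graph obtained from $\mathcal{G}$ by deleting only the edge $e^*$. Let $e^-\in A(\mathcal{G}^-)$ be a bottleneck edge of $\mathcal{G}^-$. Then $w_{e^-}\le w_{e^*}$. Moreover, if $\mathcal{G}^+$ has a bottleneck edge $e^+\in A(\mathcal{G}^+)$, then $w_{e^*}\le w_{e^+}$.
   Context: A weighted bipartite graph $\mathcal{G}=(\mathcal{V}_A\cup\mathcal{V}_T,\mathcal{E},w)$ has disjoint vertex sets $\mathcal{V}_A$ (agents) and $\mathcal{V}_T$ (tasks), edge set $\mathcal{E}\subseteq\mathcal{V}_A\times\mathcal{V}_T$, and real edge weights $w_e$, $e\in\mathcal{E}$. A matching is a set of pairwise non-adjacent edges (no two share a vertex). A maximum matching of such a graph is a matching in which every vertex of the agent side $\mathcal{V}_A$ is covered. For a graph $H$ having at least one maximum matching, its bottleneck value is $b(H)=\min_M \max_{e\in M} w_e$, the minimum over maximum matchings $M$ of $H$; a bottleneck edge of $H$ is an edge $e$ with $w_e=b(H)$ that belongs to some maximum matching $M$ of $H$ with $\max_{e'\in M}w_{e'}=b(H)$, and $A(H)$ denotes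 the set of bottleneck edges of $H$. (For $\mathcal{G}^-$ the agent side is $\mathcal{V}_A$ with the endpoint of $e^*$ removed; for $\mathcal{G}^+$ the vertex sets are unchanged.) *)

theory Defs
  imports Complex_Main
begin

text \<open>Bipartite graph: agents of type 'a, tasks of type 'b (hence disjoint),
  edges are pairs (agent, task), weights w :: ('a \<times> 'b) \<Rightarrow> real.\<close>

definition is_matching :: "('a \<times> 'b) set \<Rightarrow> ('a \<times> 'b) set \<Rightarrow> bool" where
  "is_matching E M \<longleftrightarrow> M \<subseteq> E \<and>
     (\<forall>e\<in>M. \<forall>e'\<in>M. e \<noteq> e' \<longrightarrow> fst e \<noteq> fst e' \<and> snd e \<noteq> snd e')"

definition is_max_matching :: "'a set \<Rightarrow> ('a \<times> 'b) set \<Rightarrow> ('a \<times> 'b) set \<Rightarrow> bool" where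
  "is_max_matching VA E M \<longleftrightarrow> is_matching E M \<and> (\<forall>a\<in>VA. \<exists>e\<in>M. fst e = a)"

definition bottleneck_value :: "'a set \<Rightarrow> ('a \<times> 'b) set \<Rightarrow> ('a \<times> 'b \<Rightarrow> real) \<Rightarrow> real" where
  "bottleneck_value VA E w = Min ((\<lambda>M. Max (w ` M)) ` {M. is_max_matching VA E M})"

definition bottleneck_edges :: "'a set \<Rightarrow> ('a \<times> 'b) set \<Rightarrow> ('a \<times> 'b \<Rightarrow> real) \<Rightarrow> ('a \<times> 'b) set" where
  "bottleneck_edges VA E w = {e. w e = bottleneck_value VA E w \<and>
     (\<exists>M. is_max_matching VA E M \<and> e \<in> M \<and> Max (w ` M) = bottleneck_value VA E w)}"

end

theory Submission
  imports Defs
begin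

lemma bv_le:
  assumes "finite E" "is_max_matching VA E M"
  shows "bottleneck_value VA E w \<le> Max (w ` M)"
proof -
  have "{M. is_max_matching VA E M} \<subseteq> Pow E"
    by (auto simp: is_max_matching_def is_matching_def)
  hence "finite {M. is_max_matching VA E M}" using assms(1) finite_subset by blast
  thus ?thesis unfolding bottleneck_value_def using assms(2) by (intro Min_le) auto
qed

theorem lemma1:
  fixes VA :: "'a set" and VT :: "'b set" and E :: "('a \<times> 'b) set"
    and w :: "'a \<times> 'b \<Rightarrow> real" and estar :: "'a \<times> 'b"
  assumes "finite VA" and "finite VT" and "E \<subseteq> VA \<times> VT"
    and "card VA \<le> card VT"
    and "\<exists>M. is_max_matching VA E M"
    and "estar \<in> bottleneck_edges VA E w"
  shows "(\<forall>em \<in> bottleneck_edges (VA - {fst estar})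
                 {e\<in>E. fst e \<noteq> fst estar \<and> snd e \<noteq> snd estar} w.
            w em \<le> w estar)
       \<and> (\<forall>ep \<in> bottleneck_edges VA (E - {estar}) w. w estar \<le> w ep)"
proof
  have finE: "finite E" using assms(1,2,3) finite_subset by blast
  obtain Ms where Ms: "is_max_matching VA E Ms" "estar \<in> Ms" "Max (w ` Ms) = bottleneck_value VA E w"
    and wst: "w estar = bottleneck_value VA E w"
    using assms(6) unfolding bottleneck_edges_def by blast
  have finMs: "finite Ms" using Ms(1) finE finite_subset unfolding is_max_matching_def is_matching_def by blast
  show "\<forall>em \<in> bottleneck_edges (VA - {fst estar})
                 {e\<in>E. fst e \<noteq> fst estar \<and> snd e \<noteq> snd estar} w.
            w em \<le> w estar"
  proof
    fix em assume em: "em \<in> bottleneck_edges (VA - {fst estar})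
                 {e\<in>E. fst e \<noteq> fst estar \<and> snd e \<noteq> snd estar} w"
    then obtain M' where M': "is_max_matching (VA - {fst estar}) {e\<in>E. fst e \<noteq> fst estar \<and> snd e \<noteq> snd estar} M'"
      "em \<in> M'" and wem: "w em = bottleneck_value (VA - {fst estar}) {e\<in>E. fst e \<noteq> fst estar \<and> snd e \<noteq> snd estar} w"
      unfolding bottleneck_edges_def by blast
    have emE: "em \<in> E" "fst em \<noteq> fst estar"
      using M' unfolding is_max_matching_def is_matching_def by auto
    hence fa: "fst em \<in> VA - {fst estar}" using assms(3) by auto
    have mm: "is_max_matching (VA - {fst estar}) {e\<in>E. fst e \<noteq> fst estar \<and> snd e \<noteq> snd estar} (Ms - {estar})"
    proof -
      have "Ms \<subseteq> E" and dis: "\<forall>e\<in>Ms. \<forall>e'\<in>Ms. e \<noteq> e' \<longrightarrow> fst e \<noteq> fst e' \<and> snd e \<noteq> snd e'"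
        and cov: "\<forall>a\<in>VA. \<exists>e\<in>Ms. fst e = a"
        using Ms(1) unfolding is_max_matching_def is_matching_def by auto
      have "Ms - {estar} \<subseteq> {e\<in>E. fst e \<noteq> fst estar \<and> snd e \<noteq> snd estar}"
        using \<open>Ms \<subseteq> E\<close> dis Ms(2) by blast
      moreover have "\<forall>a\<in>VA - {fst estar}. \<exists>e\<in>Ms - {estar}. fst e = a"
        using cov by fastforce
      ultimately show ?thesis unfolding is_max_matching_def is_matching_def using dis by blast
    qed
    have ne: "Ms - {estar} \<noteq> {}"
      using mm fa unfolding is_max_matching_def by blast
    have "w em \<le> Max (w ` (Ms - {estar}))"
      using wem bv_le[OF _ mm] finE by auto
    also have "\<dots> \<le> Max (w ` Ms)"
      using ne finMs by (intro Max_mono) auto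
    finally show "w em \<le> w estar" using Ms(3) wst by simp
  qed
  show "\<forall>ep \<in> bottleneck_edges VA (E - {estar}) w. w estar \<le> w ep"
  proof
    fix ep assume "ep \<in> bottleneck_edges VA (E - {estar}) w"
    then obtain Mp where Mp: "is_max_matching VA (E - {estar}) Mp"
      "Max (w ` Mp) = bottleneck_value VA (E - {estar}) w"
      and wep: "w ep = bottleneck_value VA (E - {estar}) w"
      unfolding bottleneck_edges_def by blast
    have "is_max_matching VA E Mp" using Mp(1) unfolding is_max_matching_def is_matching_def by blast
    from bv_le[OF finE this, of w] show "w estar \<le> w ep" using wst wep Mp(2) by simp
  qed
qed

end
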